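(* Let $M=(\mathcal{C},\mathcal{Q},p,q_0,q_f)$ be a nondeterministic finite-state automaton over a category. Then $\mathcal{W}(M)=(\mathcal{W}(\mathcal{C}),\mathcal{W}(\mathcal{Q}),\mathcal{W}(p),(q_0,q_f))$ is a nondeterministic finite-state automaton over an operad, and the language of constants it recognizes equals the language of arrows recognized by $M$ (identifying constants of $\mathcal{W}(\mathcal{C})$ of color $(A,B)$ with arrows $A\to B$ of $\mathcal{C}$).
   Context: Composition in categories is written diagrammatically. A functor of categories $p$ is ULF if for every arrow $\alpha$ and arrows $u,v$ with $p(\alpha)=uv$ there is a unique pair $\beta,\gamma$ with $\alpha=\beta\gamma$, $p(\beta)=u$, $p(\gamma)=v$; a functor of (colored, non-symmetric) operads $p$ is ULF if for every operation $\alpha$ and $g,h,i$ with $p(\alpha)=g\circ_i h$ there is a unique pair $\beta,\gamma$ with $\alpha=\beta\circ_i\gamma$, $p(\beta)=g$, $p(\gamma)=h$. A functor is finitary if its fibers over every object/color and every arrow/operation are finite. A nondeterministic finite-state automaton over a category is a tuple $(\mathcal{C},\mathcal{Q},p,q_0,q_f)$ with $p:\mathcal{Q}\to\mathcal{C}$ finitary ULF and $q_0,q_f$ objects of $\mathcal{Q}$; it recognizes $\{p(\alpha)\mid\alpha:q_0\to q_f\}\subseteq\mathcal{C}(p(q_0),p(q_f))$. A nondeterministic finite-state automaton over an operad is a tuple $(\mathcal{O},\mathcal{Q},p,q_r)$ with $p:\mathcal{Q}\to\mathcal{O}$ a finitary ULF functor of operads and $q_r$ a color of $\mathcal{Q}$;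 it recognizes the set $\{p(\alpha)\mid \alpha \text{ a constant (nullary operation) of } \mathcal{Q} \text{ of color } q_r\}$. The operad of spliced arrows $\mathcal{W}(\mathcal{C})$ has colors pairs $(A,B)$ of objects of $\mathcal{C}$; $n$-ary operations $(A_1,B_1),\dots,(A_n,B_n)\to(A,B)$ are sequences $w_0\text{-}\cdots\text{-}w_n$ with $w_0:A\to A_1$, $w_i:B_i\to A_{i+1}$ ($1\le i<n$), $w_n:B_n\to B$ (for $n=0$ a single arrow $A\to B$); partial composition is $(w_0\text{-}\cdots\text{-}w_n)\circ_i(u_0\text{-}\cdots\text{-}u_m)=w_0\text{-}\cdots\text{-}w_{i-2}\text{-}(w_{i-1}u_0)\text{-}u_1\text{-}\cdots\text{-}u_{m-1}\text{-}(u_mw_i)\text{-}w_{i+1}\text{-}\cdots\text{-}w_n$ with identities $\mathrm{id}_A\text{-}\mathrm{id}_B$; $\mathcal{W}(p)$ applies $p$ componentwise to colors and arrows. *)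

theory Defs
  imports Main
begin

record ('o, 'a) cat =
  Obj  :: "'o set"
  Arr  :: "'a set"
  Dom  :: "'a \<Rightarrow> 'o"
  Cod  :: "'a \<Rightarrow> 'o"
  Idt  :: "'o \<Rightarrow> 'a"
  Comp :: "'a \<Rightarrow> 'a \<Rightarrow> 'a"   \<comment> \<open>Comp f g = fg : first f, then g; needs Cod f = Dom g\<close>

definition category :: "('o, 'a) cat \<Rightarrow> bool" where
  "category C \<longleftrightarrow>
     (\<forall>f\<in>Arr C. Dom C f \<in> Obj C \<and> Cod C f \<in> Obj C) \<and>
     (\<forall>A\<in>Obj C. Idt C A \<in> Arr C \<and> Dom C (Idt C A) = A \<and> Cod C (Idt C A) = A) \<and>
     (\<forall>f\<in>Arr C. \<forall>g\<in>Arr C. Cod C f = Dom C g \<longrightarrow>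
        Comp C f g \<in> Arr C \<and> Dom C (Comp C f g) = Dom C f \<and> Cod C (Comp C f g) = Cod C g) \<and>
     (\<forall>f\<in>Arr C. Comp C (Idt C (Dom C f)) f = f \<and> Comp C f (Idt C (Cod C f)) = f) \<and>
     (\<forall>f\<in>Arr C. \<forall>g\<in>Arr C. \<forall>h\<in>Arr C. Cod C f = Dom C g \<longrightarrow> Cod C g = Dom C h \<longrightarrow>
        Comp C (Comp C f g) h = Comp C f (Comp C g h))"

definition Hom :: "('o, 'a) cat \<Rightarrow> 'o \<Rightarrow> 'o \<Rightarrow> 'a set" where
  "Hom C A B = {f \<in> Arr C. Dom C f = A \<and> Cod C f = B}"

definition cat_functor ::
  "('o, 'a) cat \<Rightarrow> ('p, 'b) cat \<Rightarrow> ('o \<Rightarrow> 'p) \<Rightarrow> ('a \<Rightarrow> 'b) \<Rightarrow> bool" where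
  "cat_functor C D Fo Fa \<longleftrightarrow> category C \<and> category D \<and>
     (\<forall>A\<in>Obj C. Fo A \<in> Obj D) \<and> (\<forall>f\<in>Arr C. Fa f \<in> Arr D) \<and>
     (\<forall>f\<in>Arr C. Dom D (Fa f) = Fo (Dom C f) \<and> Cod D (Fa f) = Fo (Cod C f)) \<and>
     (\<forall>A\<in>Obj C. Fa (Idt C A) = Idt D (Fo A)) \<and>
     (\<forall>f\<in>Arr C. \<forall>g\<in>Arr C. Cod C f = Dom C g \<longrightarrow> Fa (Comp C f g) = Comp D (Fa f) (Fa g))"

definition cat_ulf ::
  "('s, 'b) cat \<Rightarrow> ('o, 'a) cat \<Rightarrow> ('s \<Rightarrow> 'o) \<Rightarrow> ('b \<Rightarrow> 'a) \<Rightarrow> bool" where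
  "cat_ulf Q C po pa \<longleftrightarrow>
     (\<forall>\<alpha>\<in>Arr Q. \<forall>u\<in>Arr C. \<forall>v\<in>Arr C. Cod C u = Dom C v \<longrightarrow> pa \<alpha> = Comp C u v \<longrightarrow>
        (\<exists>!(\<beta>, \<gamma>). \<beta> \<in> Arr Q \<and> \<gamma> \<in> Arr Q \<and> Cod Q \<beta> = Dom Q \<gamma> \<and>
                   \<alpha> = Comp Q \<beta> \<gamma> \<and> pa \<beta> = u \<and> pa \<gamma> = v))"

definition cat_finitary ::
  "('s, 'b) cat \<Rightarrow> ('o, 'a) cat \<Rightarrow> ('s \<Rightarrow> 'o) \<Rightarrow> ('b \<Rightarrow> 'a) \<Rightarrow> bool" where
  "cat_finitary Q C po pa \<longleftrightarrow>
     (\<forall>A\<in>Obj C. finite {q \<in> Obj Q. po q = A}) \<and>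
     (\<forall>f\<in>Arr C. finite {\<alpha> \<in> Arr Q. pa \<alpha> = f})"

definition nfa_cat ::
  "('o, 'a) cat \<Rightarrow> ('s, 'b) cat \<Rightarrow> ('s \<Rightarrow> 'o) \<Rightarrow> ('b \<Rightarrow> 'a) \<Rightarrow> 's \<Rightarrow> 's \<Rightarrow> bool" where
  "nfa_cat C Q po pa q0 qf \<longleftrightarrow>
     cat_functor Q C po pa \<and> cat_ulf Q C po pa \<and> cat_finitary Q C po pa \<and>
     q0 \<in> Obj Q \<and> qf \<in> Obj Q"

definition nfa_cat_lang ::
  "('o, 'a) cat \<Rightarrow> ('s, 'b) cat \<Rightarrow> ('s \<Rightarrow> 'o) \<Rightarrow> ('b \<Rightarrow> 'a) \<Rightarrow> 's \<Rightarrow> 's \<Rightarrow> 'a set" where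
  "nfa_cat_lang C Q po pa q0 qf = pa ` Hom Q q0 qf"

text \<open>Partial composition OComp g i h = g \<circ>_i h, with 1-based index i, 1 \<le> i \<le> arity g,
  defined when Out h = i-th input color of g.\<close>
record ('c, 'p) operad =
  Col   :: "'c set"
  Ops   :: "'p set"
  Ins   :: "'p \<Rightarrow> 'c list"
  Out   :: "'p \<Rightarrow> 'c"
  OId   :: "'c \<Rightarrow> 'p"
  OComp :: "'p \<Rightarrow> nat \<Rightarrow> 'p \<Rightarrow> 'p"

abbreviation arity :: "('c, 'p) operad \<Rightarrow> 'p \<Rightarrow> nat" where
  "arity Op g \<equiv> length (Ins Op g)"

definition composable :: "('c, 'p) operad \<Rightarrow> 'p \<Rightarrow> nat \<Rightarrow> 'p \<Rightarrow> bool" where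
  "composable Op g i h \<longleftrightarrow> g \<in> Ops Op \<and> h \<in> Ops Op \<and> 1 \<le> i \<and> i \<le> arity Op g \<and>
     Out Op h = Ins Op g ! (i - 1)"

definition is_operad :: "('c, 'p) operad \<Rightarrow> bool" where
  "is_operad Op \<longleftrightarrow>
     (\<forall>g\<in>Ops Op. set (Ins Op g) \<subseteq> Col Op \<and> Out Op g \<in> Col Op) \<and>
     (\<forall>c\<in>Col Op. OId Op c \<in> Ops Op \<and> Ins Op (OId Op c) = [c] \<and> Out Op (OId Op c) = c) \<and>
     (\<forall>g h i. composable Op g i h \<longrightarrow>
        OComp Op g i h \<in> Ops Op \<and>
        Ins Op (OComp Op g i h) = take (i - 1) (Ins Op g) @ Ins Op h @ drop i (Ins Op g) \<and>
        Out Op (OComp Op g i h) = Out Op g) \<and>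
     (\<forall>g\<in>Ops Op. OComp Op (OId Op (Out Op g)) 1 g = g) \<and>
     (\<forall>g\<in>Ops Op. \<forall>i. 1 \<le> i \<and> i \<le> arity Op g \<longrightarrow> OComp Op g i (OId Op (Ins Op g ! (i - 1))) = g) \<and>
     \<comment> \<open>sequential associativity\<close>
     (\<forall>f g h i j. composable Op f i g \<longrightarrow> composable Op g j h \<longrightarrow>
        OComp Op (OComp Op f i g) (i - 1 + j) h = OComp Op f i (OComp Op g j h)) \<and>
     \<comment> \<open>parallel associativity\<close>
     (\<forall>f g h i k. composable Op f i g \<longrightarrow> composable Op f k h \<longrightarrow> i < k \<longrightarrow>
        OComp Op (OComp Op f i g) (k - 1 + arity Op g) h = OComp Op (OComp Op f k h) i g)"

definition operad_functor ::
  "('c, 'p) operad \<Rightarrow> ('d, 'q) operad \<Rightarrow> ('c \<Rightarrow> 'd) \<Rightarrow> ('p \<Rightarrow> 'q) \<Rightarrow> bool" where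
  "operad_functor Op P Fc Fp \<longleftrightarrow> is_operad Op \<and> is_operad P \<and>
     (\<forall>c\<in>Col Op. Fc c \<in> Col P) \<and> (\<forall>g\<in>Ops Op. Fp g \<in> Ops P) \<and>
     (\<forall>g\<in>Ops Op. Ins P (Fp g) = map Fc (Ins Op g) \<and> Out P (Fp g) = Fc (Out Op g)) \<and>
     (\<forall>c\<in>Col Op. Fp (OId Op c) = OId P (Fc c)) \<and>
     (\<forall>g h i. composable Op g i h \<longrightarrow> Fp (OComp Op g i h) = OComp P (Fp g) i (Fp h))"

definition operad_ulf ::
  "('s, 'b) operad \<Rightarrow> ('c, 'p) operad \<Rightarrow> ('s \<Rightarrow> 'c) \<Rightarrow> ('b \<Rightarrow> 'p) \<Rightarrow> bool" where
  "operad_ulf Q Op pc pp \<longleftrightarrow>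
     (\<forall>\<alpha>\<in>Ops Q. \<forall>g h i. composable Op g i h \<longrightarrow> pp \<alpha> = OComp Op g i h \<longrightarrow>
        (\<exists>!(\<beta>, \<gamma>). composable Q \<beta> i \<gamma> \<and> \<alpha> = OComp Q \<beta> i \<gamma> \<and> pp \<beta> = g \<and> pp \<gamma> = h))"

definition operad_finitary ::
  "('s, 'b) operad \<Rightarrow> ('c, 'p) operad \<Rightarrow> ('s \<Rightarrow> 'c) \<Rightarrow> ('b \<Rightarrow> 'p) \<Rightarrow> bool" where
  "operad_finitary Q Op pc pp \<longleftrightarrow>
     (\<forall>c\<in>Col Op. finite {q \<in> Col Q. pc q = c}) \<and>
     (\<forall>g\<in>Ops Op. finite {\<alpha> \<in> Ops Q. pp \<alpha> = g})"

definition nfa_op ::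
  "('c, 'p) operad \<Rightarrow> ('s, 'b) operad \<Rightarrow> ('s \<Rightarrow> 'c) \<Rightarrow> ('b \<Rightarrow> 'p) \<Rightarrow> 's \<Rightarrow> bool" where
  "nfa_op Op Q pc pp qr \<longleftrightarrow>
     operad_functor Q Op pc pp \<and> operad_ulf Q Op pc pp \<and> operad_finitary Q Op pc pp \<and>
     qr \<in> Col Q"

definition nfa_op_lang ::
  "('c, 'p) operad \<Rightarrow> ('s, 'b) operad \<Rightarrow> ('s \<Rightarrow> 'c) \<Rightarrow> ('b \<Rightarrow> 'p) \<Rightarrow> 's \<Rightarrow> 'p set" where
  "nfa_op_lang Op Q pc pp qr = pp ` {\<alpha> \<in> Ops Q. Ins Q \<alpha> = [] \<and> Out Q \<alpha> = qr}"

text \<open>An n-ary operation w0-...-wn is the list [w0,...,wn] of length n+1.\<close>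
definition W_comp :: "('o, 'a) cat \<Rightarrow> 'a list \<Rightarrow> nat \<Rightarrow> 'a list \<Rightarrow> 'a list" where
  "W_comp C ws i us =
     (if length us = 1 then
        take (i - 1) ws @ [Comp C (Comp C (ws ! (i - 1)) (hd us)) (ws ! i)] @ drop (i + 1) ws
      else
        take (i - 1) ws @ [Comp C (ws ! (i - 1)) (hd us)] @ butlast (tl us) @
          [Comp C (last us) (ws ! i)] @ drop (i + 1) ws)"

definition W :: "('o, 'a) cat \<Rightarrow> ('o \<times> 'o, 'a list) operad" where
  "W C = \<lparr> Col = Obj C \<times> Obj C,
           Ops = {ws. ws \<noteq> [] \<and> set ws \<subseteq> Arr C},
           Ins = (\<lambda>ws. map (\<lambda>k. (Cod C (ws ! (k - 1)), Dom C (ws ! k))) [1..<length ws]),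
           Out = (\<lambda>ws. (Dom C (hd ws), Cod C (last ws))),
           OId = (\<lambda>(A, B). [Idt C A, Idt C B]),
           OComp = W_comp C \<rparr>"

definition W_col_map :: "('s \<Rightarrow> 'o) \<Rightarrow> ('s \<times> 's \<Rightarrow> 'o \<times> 'o)" where
  "W_col_map po = map_prod po po"

definition W_op_map :: "('b \<Rightarrow> 'a) \<Rightarrow> ('b list \<Rightarrow> 'a list)" where
  "W_op_map pa = map pa"

end

theory Submission
  imports Defs
begin

lemma catD:
  assumes "category C"
  shows "f \<in> Arr C \<Longrightarrow> Dom C f \<in> Obj C" "f \<in> Arr C \<Longrightarrow> Cod C f \<in> Obj C"
    "A \<in> Obj C \<Longrightarrow> Idt C A \<in> Arr C" "A \<in> Obj C \<Longrightarrow> Dom C (Idt C A) = A" "A \<in> Obj C \<Longrightarrow> Cod C (Idt C A) = A"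
    "f \<in> Arr C \<Longrightarrow> g \<in> Arr C \<Longrightarrow> Cod C f = Dom C g \<Longrightarrow> Comp C f g \<in> Arr C"
    "f \<in> Arr C \<Longrightarrow> g \<in> Arr C \<Longrightarrow> Cod C f = Dom C g \<Longrightarrow> Dom C (Comp C f g) = Dom C f"
    "f \<in> Arr C \<Longrightarrow> g \<in> Arr C \<Longrightarrow> Cod C f = Dom C g \<Longrightarrow> Cod C (Comp C f g) = Cod C g"
    "f \<in> Arr C \<Longrightarrow> Comp C (Idt C (Dom C f)) f = f"
    "f \<in> Arr C \<Longrightarrow> Comp C f (Idt C (Cod C f)) = f"
    "f \<in> Arr C \<Longrightarrow> g \<in> Arr C \<Longrightarrow> h \<in> Arr C \<Longrightarrow> Cod C f = Dom C g \<Longrightarrow> Cod C g = Dom C h \<Longrightarrow>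
        Comp C (Comp C f g) h = Comp C f (Comp C g h)"
  using assms unfolding category_def by blast+

definition glue :: "('o,'a) cat \<Rightarrow> 'a list \<Rightarrow> 'a list \<Rightarrow> 'a list" where
  "glue C X Y = butlast X @ Comp C (last X) (hd Y) # tl Y"

definition okl :: "('o,'a) cat \<Rightarrow> 'a list \<Rightarrow> bool" where
  "okl C X \<longleftrightarrow> X \<noteq> [] \<and> set X \<subseteq> Arr C"

lemma glue_length[simp]: "X \<noteq> [] \<Longrightarrow> Y \<noteq> [] \<Longrightarrow> length (glue C X Y) = length X + length Y - 1"
  unfolding glue_def by (cases Y) auto

lemma glue_ne[simp]: "glue C X Y \<noteq> []"
  unfolding glue_def by simp

lemma glue_props:
  assumes c: "category C" and X: "okl C X" and Y: "okl C Y" and m: "Cod C (last X) = Dom C (hd Y)"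
  shows "okl C (glue C X Y)" "Dom C (hd (glue C X Y)) = Dom C (hd X)"
    "Cod C (last (glue C X Y)) = Cod C (last Y)"
proof -
  have lx: "last X \<in> Arr C" "hd Y \<in> Arr C" using X Y unfolding okl_def by auto
  have cm: "Comp C (last X) (hd Y) \<in> Arr C" using catD(6)[OF c lx m] .
  have bx: "set (butlast X) \<subseteq> Arr C" using X unfolding okl_def by (meson in_set_butlastD subsetD subsetI)
  have ty: "set (tl Y) \<subseteq> Arr C" using Y unfolding okl_def by (meson list.set_sel(2) subsetD subsetI)
  show "okl C (glue C X Y)" unfolding okl_def glue_def using cm bx ty by auto
  show "Dom C (hd (glue C X Y)) = Dom C (hd X)"
    using X catD(7)[OF c lx m] unfolding glue_def okl_def
    by (cases X rule: rev_cases) (auto simp: hd_append)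
  show "Cod C (last (glue C X Y)) = Cod C (last Y)"
    using Y catD(8)[OF c lx m] unfolding glue_def okl_def
    by (cases Y) (auto)
qed

lemma glue_assoc:
  assumes c: "category C" and X: "okl C X" and Y: "okl C Y" and Z: "okl C Z"
    and m1: "Cod C (last X) = Dom C (hd Y)" and m2: "Cod C (last Y) = Dom C (hd Z)"
  shows "glue C (glue C X Y) Z = glue C X (glue C Y Z)"
proof (cases "tl Y = []")
  case True
  then obtain y where y: "Y = [y]" using Y unfolding okl_def by (cases Y) auto
  have a: "last X \<in> Arr C" "y \<in> Arr C" "hd Z \<in> Arr C" using X Y Z y unfolding okl_def by auto
  show ?thesis using catD(11)[OF c a] m1 m2 y unfolding glue_def by simp
next
  case False
  then obtain y Y' where y: "Y = y # Y'" "Y' \<noteq> []" using Y unfolding okl_def by (cases Y) auto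
  show ?thesis using y unfolding glue_def by (simp add: butlast_append)
qed

lemma take_glue_lt: "n < length X \<Longrightarrow> take n (glue C X Y) = take n X"
  unfolding glue_def by (cases X rule: rev_cases) (auto simp: take_append)

lemma take_glue_ge: "X \<noteq> [] \<Longrightarrow> Y \<noteq> [] \<Longrightarrow> length X \<le> n \<Longrightarrow> take n (glue C X Y) = glue C X (take (n - length X + 1) Y)"
  unfolding glue_def
  using Suc_diff_le[of "length X" n]
  by (cases Y; cases X; cases n) (auto simp: take_append)

lemma drop_glue_lt: "n < length X \<Longrightarrow> drop n (glue C X Y) = glue C (drop n X) Y"
  unfolding glue_def by (cases X rule: rev_cases) (auto simp: drop_append)

lemma drop_glue_ge: "X \<noteq> [] \<Longrightarrow> Y \<noteq> [] \<Longrightarrow> length X \<le> n \<Longrightarrow> drop n (glue C X Y) = drop (n - length X + 1) Y"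
  unfolding glue_def
  using Suc_diff_le[of "length X" n]
  by (cases Y; cases X; cases n) (auto simp: drop_append)

lemma W_comp_glue:
  assumes "1 \<le> i" "i < length ws" "us \<noteq> []"
  shows "W_comp C ws i us = glue C (glue C (take i ws) us) (drop i ws)"
proof -
  have t: "take i ws = take (i-1) ws @ [ws!(i-1)]" using assms
    by (metis Suc_diff_1 less_imp_diff_less less_le_trans take_Suc_conv_app_nth zero_less_one)
  have d: "drop i ws = ws!i # drop (i+1) ws" using assms by (simp add: Cons_nth_drop_Suc)
  show ?thesis unfolding W_comp_def glue_def t d using assms(3)
    by (cases us) (auto simp: butlast_append)
qed

fun insl :: "('o,'a) cat \<Rightarrow> 'a list \<Rightarrow> ('o \<times> 'o) list" where
  "insl C (x # y # r) = (Cod C x, Dom C y) # insl C (y # r)"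
| "insl C _ = []"

lemma insl_length[simp]: "length (insl C ws) = length ws - 1"
  by (induction C ws rule: insl.induct) auto

lemma insl_nth: "k < length ws - 1 \<Longrightarrow> insl C ws ! k = (Cod C (ws!k), Dom C (ws ! Suc k))"
proof (induction C ws arbitrary: k rule: insl.induct)
  case (1 C x y r) then show ?case by (cases k) auto
qed auto

lemma Ins_W: "Ins (W C) ws = insl C ws"
  by (rule nth_equalityI) (auto simp: W_def insl_nth)

lemma insl_take: "1 \<le> i \<Longrightarrow> insl C (take i ws) = take (i-1) (insl C ws)"
  by (rule nth_equalityI) (auto simp: insl_nth)

lemma insl_drop: "insl C (drop i ws) = drop i (insl C ws)"
  by (rule nth_equalityI) (auto simp: insl_nth)

lemma insl_cong_hd: "Cod C c = Cod C y \<Longrightarrow> insl C (c # r) = insl C (y # r)"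
  by (cases r) auto

lemma insl_Cons: "L \<noteq> [] \<Longrightarrow> insl C (x # L) = (Cod C x, Dom C (hd L)) # insl C L"
  by (cases L) auto

lemma insl_glue:
  assumes "X \<noteq> []" "Y \<noteq> []" "Dom C (Comp C (last X) (hd Y)) = Dom C (last X)"
    "Cod C (Comp C (last X) (hd Y)) = Cod C (hd Y)"
  shows "insl C (glue C X Y) = insl C X @ insl C Y"
  using assms
proof (induction X rule: induct_list012)
  case 1 then show ?case by simp
next
  case (2 x) then show ?case unfolding glue_def
    using insl_cong_hd[of C "Comp C x (hd Y)" "hd Y" "tl Y"] by (cases Y) auto
next
  case (3 x z zs)
  have "glue C (x # z # zs) Y = x # glue C (z # zs) Y" unfolding glue_def by simp
  moreover have "hd (glue C (z # zs) Y) = (if zs = [] then Comp C z (hd Y) else z)"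
    unfolding glue_def by (cases zs rule: rev_cases) auto
  ultimately show ?case using 3 by (simp add: insl_Cons split: if_splits)
qed

lemma Ops_W[simp]: "ws \<in> Ops (W C) \<longleftrightarrow> okl C ws"
  by (auto simp: W_def okl_def)

lemma Out_W[simp]: "Out (W C) ws = (Dom C (hd ws), Cod C (last ws))"
  by (simp add: W_def)

lemma OComp_W[simp]: "OComp (W C) = W_comp C"
  by (simp add: W_def)

lemma Col_W[simp]: "Col (W C) = Obj C \<times> Obj C"
  by (simp add: W_def)

lemma OId_W[simp]: "OId (W C) (A, B) = [Idt C A, Idt C B]"
  by (simp add: W_def)

lemma composable_W: "composable (W C) g i h \<longleftrightarrow> okl C g \<and> okl C h \<and> 1 \<le> i \<and> i < length g
   \<and> Dom C (hd h) = Cod C (g!(i-1)) \<and> Cod C (last h) = Dom C (g!i)"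
  unfolding composable_def Ins_W by (auto simp: insl_nth)

lemma okl_take: "okl C g \<Longrightarrow> 1 \<le> i \<Longrightarrow> okl C (take i g)"
  unfolding okl_def by (auto dest: in_set_takeD)

lemma okl_drop: "okl C g \<Longrightarrow> i < length g \<Longrightarrow> okl C (drop i g)"
  unfolding okl_def by (auto dest: in_set_dropD)

lemma last_take_nth: "1 \<le> i \<Longrightarrow> i \<le> length g \<Longrightarrow> last (take i g) = g!(i-1)"
  by (subst last_conv_nth) auto

lemma okl_ne: "okl C X \<Longrightarrow> X \<noteq> []" by (simp add: okl_def)

lemma glue_simps:
  assumes "category C" "okl C X" "okl C Y" "Cod C (last X) = Dom C (hd Y)"
  shows "okl C (glue C X Y) \<longleftrightarrow> True" "Dom C (hd (glue C X Y)) = Dom C (hd X)"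
    "Cod C (last (glue C X Y)) = Cod C (last Y)"
  using glue_props[OF assms] by auto

lemma glue_assoc':
  assumes c: "category C" and X: "okl C X" and Y: "okl C Y" and Z: "okl C Z"
    and m1: "Cod C (last X) = Dom C (hd Y)" and m2: "Cod C (last Y) = Dom C (hd Z)"
  shows "glue C (glue C X Y) Z = glue C X (glue C Y Z)"
  using glue_assoc[OF assms] .

lemma composable_facts:
  assumes c: "category C" and cp: "composable (W C) g i h"
  shows "okl C (take i g)" "okl C (drop i g)" "okl C h" "okl C g"
    "Cod C (last (take i g)) = Dom C (hd h)" "Cod C (last h) = Dom C (hd (drop i g))"
    "W_comp C g i h = glue C (glue C (take i g) h) (drop i g)"
    "1 \<le> i" "i < length g" "length (take i g) = i" "length (drop i g) = length g - i"
proof -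
  note cw = cp[unfolded composable_W]
  show "okl C (take i g)" "okl C (drop i g)" "okl C h" "okl C g" "1 \<le> i" "i < length g"
    using cw okl_take okl_drop by auto
  show "Cod C (last (take i g)) = Dom C (hd h)" using cw by (simp add: last_take_nth)
  show "Cod C (last h) = Dom C (hd (drop i g))" using cw by (simp add: hd_drop_conv_nth)
  show "W_comp C g i h = glue C (glue C (take i g) h) (drop i g)"
    using cw W_comp_glue okl_ne by blast
  show "length (take i g) = i" "length (drop i g) = length g - i" using cw by auto
qed

lemma last_glue: "Y \<noteq> [] \<Longrightarrow> tl Y \<noteq> [] \<Longrightarrow> last (glue C X Y) = last Y"
  unfolding glue_def by (cases Y) auto

lemma insl_glue':
  assumes c: "category C" and X: "okl C X" and Y: "okl C Y" and m: "Cod C (last X) = Dom C (hd Y)"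
  shows "insl C (glue C X Y) = insl C X @ insl C Y"
proof -
  have lx: "last X \<in> Arr C" "hd Y \<in> Arr C" using X Y unfolding okl_def by auto
  show ?thesis using insl_glue[OF okl_ne[OF X] okl_ne[OF Y] catD(7)[OF c lx m] catD(8)[OF c lx m]] .
qed

lemma W_comp_props:
  assumes c: "category C" and cp: "composable (W C) g i h"
  shows "okl C (W_comp C g i h)" "Dom C (hd (W_comp C g i h)) = Dom C (hd g)"
    "Cod C (last (W_comp C g i h)) = Cod C (last g)"
    "insl C (W_comp C g i h) = take (i - 1) (insl C g) @ insl C h @ drop i (insl C g)"
proof -
  note f = composable_facts[OF c cp]
  show "okl C (W_comp C g i h)" unfolding f(7) using f by (simp add: glue_simps[OF c])
  show "Dom C (hd (W_comp C g i h)) = Dom C (hd g)" unfolding f(7) using f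
    by (simp add: glue_simps[OF c] hd_take)
  show "Cod C (last (W_comp C g i h)) = Cod C (last g)" unfolding f(7) using f
    by (simp add: glue_simps[OF c] last_drop)
  show "insl C (W_comp C g i h) = take (i - 1) (insl C g) @ insl C h @ drop i (insl C g)"
    unfolding f(7) using f
    by (simp add: glue_simps[OF c] insl_glue'[OF c] insl_take insl_drop)
qed

lemma composable_comp:
  assumes c: "category C" and c1: "composable (W C) f i g" and c2: "composable (W C) g j h"
  shows "composable (W C) f i (W_comp C g j h)"
  using c1 W_comp_props[OF c c2] unfolding composable_W by simp

lemma seq_assoc_W:
  assumes c: "category C" and c1: "composable (W C) f i g" and c2: "composable (W C) g j h"
  shows "W_comp C (W_comp C f i g) (i - 1 + j) h = W_comp C f i (W_comp C g j h)"
proof -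
  note f1 = composable_facts[OF c c1] and f2 = composable_facts[OF c c2]
  define T where "T = take i f"
  define D where "D = drop i f"
  define G1 where "G1 = take j g"
  define G2 where "G2 = drop j g"
  have ne: "T \<noteq> []" "D \<noteq> []" "G1 \<noteq> []" "G2 \<noteq> []" "g \<noteq> []" "h \<noteq> []"
    using f1 f2 okl_ne unfolding T_def D_def G1_def G2_def by blast+
  have L: "W_comp C f i g = glue C (glue C T g) D" using f1 T_def D_def by simp
  have lenTg: "length (glue C T g) = i + length g - 1" using ne f1 T_def by simp
  have lenL: "length (glue C (glue C T g) D) = length f + length g - 2"
    using ne f1 T_def D_def by simp
  have "W_comp C (glue C (glue C T g) D) (i - 1 + j) h
      = glue C (glue C (take (i - 1 + j) (glue C (glue C T g) D)) h) (drop (i - 1 + j) (glue C (glue C T g) D))"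
    using W_comp_glue[of "i - 1 + j" "glue C (glue C T g) D" h C] lenL f1 f2 ne by simp
  also have "take (i - 1 + j) (glue C (glue C T g) D) = glue C T G1"
    using take_glue_lt[of "i - 1 + j" "glue C T g" C D] take_glue_ge[of T g "i - 1 + j" C]
      lenTg f1 f2 ne T_def G1_def by simp
  also have "drop (i - 1 + j) (glue C (glue C T g) D) = glue C G2 D"
    using drop_glue_lt[of "i - 1 + j" "glue C T g" C D] drop_glue_ge[of T g "i - 1 + j" C]
      lenTg f1 f2 ne T_def G2_def by simp
  finally have lhs: "W_comp C (W_comp C f i g) (i - 1 + j) h = glue C (glue C (glue C T G1) h) (glue C G2 D)"
    using L by simp
  have rhs: "W_comp C f i (W_comp C g j h) = glue C (glue C T (glue C (glue C G1 h) G2)) D"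
    using f2 composable_facts(7)[OF c composable_comp[OF c c1 c2]] T_def D_def G1_def G2_def
    by simp
  have ok: "okl C T" "okl C D" "okl C G1" "okl C G2" "okl C h"
    using f1 f2 T_def D_def G1_def G2_def by auto
  have m: "Cod C (last T) = Dom C (hd G1)" "Cod C (last G1) = Dom C (hd h)"
    "Cod C (last h) = Dom C (hd G2)" "Cod C (last G2) = Dom C (hd D)"
    using f1 f2 T_def D_def G1_def G2_def by (auto simp: hd_take last_drop)
  show ?thesis unfolding lhs rhs using ok m
    by (simp add: glue_assoc'[OF c] glue_simps[OF c])
qed

lemma par_assoc_W:
  assumes c: "category C" and c1: "composable (W C) f i g" and c2: "composable (W C) f k h"
    and ik: "i < k"
  shows "W_comp C (W_comp C f i g) (k - 1 + (length g - 1)) h = W_comp C (W_comp C f k h) i g"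
proof -
  note f1 = composable_facts[OF c c1] and f2 = composable_facts[OF c c2]
  define T where "T = take i f"
  define M where "M = drop i (take k f)"
  define D where "D = drop k f"
  define Tk where "Tk = take k f"
  have okM: "okl C M" using f1 f2 ik unfolding M_def okl_def by (auto dest: in_set_dropD in_set_takeD)
  have ne: "T \<noteq> []" "D \<noteq> []" "M \<noteq> []" "g \<noteq> []" "h \<noteq> []" "drop i f \<noteq> []" "Tk \<noteq> []"
    using f1 f2 okl_ne okM unfolding T_def D_def Tk_def by auto
  have L: "W_comp C f i g = glue C (glue C T g) (drop i f)" using f1 T_def by simp
  have lenTg: "length (glue C T g) = i + length g - 1" using ne f1 T_def by simp
  have lenL: "length (glue C (glue C T g) (drop i f)) = length f + length g - 2"
    using ne f1 T_def by simp
  have g2: "1 \<le> length g" using ne by (simp add: Suc_leI)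
  have "W_comp C (glue C (glue C T g) (drop i f)) (k - 1 + (length g - 1)) h
      = glue C (glue C (take (k - 1 + (length g - 1)) (glue C (glue C T g) (drop i f))) h)
          (drop (k - 1 + (length g - 1)) (glue C (glue C T g) (drop i f)))"
    using W_comp_glue[of "k - 1 + (length g - 1)" "glue C (glue C T g) (drop i f)" h C] lenL f1 f2 ne ik g2
    by simp
  also have "take (k - 1 + (length g - 1)) (glue C (glue C T g) (drop i f)) = glue C (glue C T g) M"
  proof -
    have "k - 1 + (length g - 1) - length (glue C T g) + 1 = k - i" using lenTg ik g2 f1 by simp
    then show ?thesis
      using take_glue_ge[of "glue C T g" "drop i f" "k - 1 + (length g - 1)" C] lenTg ik g2 f1 ne
      unfolding M_def by (simp add: take_drop)
  qed
  also have "drop (k - 1 + (length g - 1)) (glue C (glue C T g) (drop i f)) = D"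
  proof -
    have "k - 1 + (length g - 1) - length (glue C T g) + 1 = k - i" using lenTg ik g2 f1 by simp
    then show ?thesis
      using drop_glue_ge[of "glue C T g" "drop i f" "k - 1 + (length g - 1)" C] lenTg ik g2 f1 ne
      unfolding D_def by simp
  qed
  finally have lhs: "W_comp C (W_comp C f i g) (k - 1 + (length g - 1)) h = glue C (glue C (glue C (glue C T g) M) h) D"
    using L by simp
  have R: "W_comp C f k h = glue C (glue C Tk h) D" using f2 Tk_def D_def by simp
  have lenTkh: "length (glue C Tk h) = k + length h - 1" using ne f2 Tk_def by simp
  have ilt: "i < length (glue C Tk h)" using lenTkh ik ne by (cases h) auto
  have tR: "take i (W_comp C f k h) = T" unfolding R
    using take_glue_lt[OF ilt, where Y=D] take_glue_lt[of i Tk C h] ik ne f2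
    unfolding T_def Tk_def by simp
  have dR: "drop i (W_comp C f k h) = glue C (glue C M h) D" unfolding R
    using drop_glue_lt[OF ilt, where Y=D] drop_glue_lt[of i Tk C h] ik ne f2
    unfolding M_def Tk_def by simp
  have lenR: "length (W_comp C f k h) = length f + length h - 2" unfolding R
    using ne f2 Tk_def D_def by simp
  have okR: "okl C (W_comp C f k h)" using W_comp_props[OF c c2] by simp
  have okM: "okl C M" using okM .
  have mm: "Dom C (hd M) = Dom C (f ! i)" unfolding M_def using ik f2
    by (simp add: hd_drop_conv_nth)
  have ok: "okl C T" "okl C D" "okl C M" "okl C g" "okl C h"
    using f1 f2 okM T_def D_def by auto
  have m: "Cod C (last T) = Dom C (hd g)" "Cod C (last g) = Dom C (hd M)"
    "Cod C (last M) = Dom C (hd h)" "Cod C (last h) = Dom C (hd D)"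
    using f1(5) f1(6) f2(5) f2(6) ik f2(9) ne unfolding T_def D_def M_def
    by (auto simp: hd_drop_conv_nth last_take_nth)
  have DhdR: "Dom C (hd (drop i (W_comp C f k h))) = Dom C (f ! i)"
    unfolding dR using ok m mm by (simp add: glue_simps[OF c])
  have c3: "composable (W C) (W_comp C f k h) i g"
    unfolding composable_W
  proof (intro conjI)
    show "okl C (W_comp C f k h)" "okl C g" "1 \<le> i" using okR f1 by auto
    have "1 \<le> length h" using ne by (cases h) auto
    then show il: "i < length (W_comp C f k h)" using lenR ik f2(9) by linarith
    have "W_comp C f k h ! (i - 1) = take i (W_comp C f k h) ! (i - 1)"
      using f1(8) by simp
    also have "\<dots> = f ! (i - 1)" unfolding tR T_def using f1(8) by simp
    finally show "Dom C (hd g) = Cod C (W_comp C f k h ! (i - 1))"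
      using c1 unfolding composable_W by simp
    show "Cod C (last g) = Dom C (W_comp C f k h ! i)"
      using DhdR hd_drop_conv_nth[OF il] c1 unfolding composable_W by simp
  qed
  have rhs: "W_comp C (W_comp C f k h) i g = glue C (glue C T g) (glue C (glue C M h) D)"
    using composable_facts(7)[OF c c3] tR dR by simp
  define X where "X = glue C T g"
  have okX: "okl C X" "Cod C (last X) = Dom C (hd M)"
    using glue_props[OF c ok(1) ok(4) m(1)] m(2) unfolding X_def by auto
  have okMh: "okl C (glue C M h)" "Cod C (last (glue C M h)) = Dom C (hd D)"
    "Dom C (hd (glue C M h)) = Dom C (hd M)"
    using glue_props[OF c ok(3) ok(5) m(3)] m(4) by auto
  have e: "Cod C (last X) = Dom C (hd (glue C M h))" using okX(2) okMh(3) by simp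
  have "glue C (glue C (glue C X M) h) D = glue C (glue C X (glue C M h)) D"
    by (rule arg_cong[where f="\<lambda>Z. glue C Z D", OF glue_assoc[OF c okX(1) ok(3) ok(5) okX(2) m(3)]])
  also have "\<dots> = glue C X (glue C (glue C M h) D)"
    by (rule glue_assoc[OF c okX(1) okMh(1) ok(2) e okMh(2)])
  finally show ?thesis unfolding lhs rhs X_def[symmetric] .
qed

lemma set_insl: "x \<in> set (insl C ws) \<Longrightarrow> \<exists>k. k < length ws - 1 \<and> x = (Cod C (ws!k), Dom C (ws ! Suc k))"
  by (auto simp: in_set_conv_nth insl_nth)

lemma left_id_W:
  assumes c: "category C" and g: "okl C g"
  shows "W_comp C [Idt C (Dom C (hd g)), Idt C (Cod C (last g))] 1 g = g"
proof (cases g)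
  case Nil then show ?thesis using g okl_ne by blast
next
  case (Cons x r)
  have ar: "set g \<subseteq> Arr C" using g by (simp add: okl_def)
  show ?thesis
  proof (cases r)
    case Nil
    have xa: "x \<in> Arr C" using ar Cons by auto
    then show ?thesis using Cons Nil catD(9,10)[OF c xa] unfolding W_comp_def by simp
  next
    case (Cons y r')
    have xa: "x \<in> Arr C" "last r \<in> Arr C" using ar \<open>g = x # r\<close> Cons by auto
    have rne: "r \<noteq> []" using Cons by simp
    have "W_comp C [Idt C (Dom C (hd g)), Idt C (Cod C (last g))] 1 g = x # butlast r @ [last r]"
      using \<open>g = x # r\<close> rne catD(9)[OF c xa(1)] catD(10)[OF c xa(2)] unfolding W_comp_def
      by simp
    also have "\<dots> = g" using append_butlast_last_id[OF rne] \<open>g = x # r\<close> by simp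
    finally show ?thesis .
  qed
qed

lemma right_id_W:
  assumes c: "category C" and g: "okl C g" and i: "1 \<le> i" "i < length g"
  shows "W_comp C g i [Idt C (Cod C (g!(i-1))), Idt C (Dom C (g!i))] = g"
proof -
  have ar: "set g \<subseteq> Arr C" using g by (simp add: okl_def)
  have a: "g!(i-1) \<in> Arr C" "g!i \<in> Arr C" using ar i by auto
  have t: "take i g = take (i-1) g @ [g!(i-1)]" using i
    by (metis Suc_diff_1 less_imp_diff_less less_le_trans take_Suc_conv_app_nth zero_less_one)
  have d: "drop i g = g!i # drop (i+1) g" using i by (simp add: Cons_nth_drop_Suc)
  have "g = take (i-1) g @ [g!(i-1)] @ [g!i] @ drop (i+1) g"
    using t d append_take_drop_id[of i g] by simp
  then show ?thesis unfolding W_comp_def using catD(10)[OF c a(1)] catD(9)[OF c a(2)] by simp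
qed

lemma is_operad_W:
  assumes c: "category C"
  shows "is_operad (W C)"
  unfolding is_operad_def
proof (intro conjI allI impI ballI)
  fix g assume "g \<in> Ops (W C)"
  then have g: "okl C g" by simp
  then have ar: "set g \<subseteq> Arr C" by (simp add: okl_def)
  show "set (Ins (W C) g) \<subseteq> Col (W C)" unfolding Ins_W
  proof
    fix x assume "x \<in> set (insl C g)"
    then obtain k where "k < length g - 1" "x = (Cod C (g!k), Dom C (g ! Suc k))" using set_insl by blast
    moreover have "g!k \<in> Arr C" "g ! Suc k \<in> Arr C" using ar calculation(1) by auto
    ultimately show "x \<in> Col (W C)" using catD(1,2)[OF c] by auto
  qed
  have "hd g \<in> Arr C" "last g \<in> Arr C" using ar okl_ne[OF g] by auto
  then show "Out (W C) g \<in> Col (W C)" using catD(1,2)[OF c] by auto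
  show "OComp (W C) (OId (W C) (Out (W C) g)) 1 g = g" using left_id_W[OF c g] by simp
next
  fix cc assume "cc \<in> Col (W C)"
  then obtain A B where cc: "cc = (A, B)" "A \<in> Obj C" "B \<in> Obj C" by auto
  show "OId (W C) cc \<in> Ops (W C)" "Ins (W C) (OId (W C) cc) = [cc]" "Out (W C) (OId (W C) cc) = cc"
    using cc catD(3,4,5)[OF c cc(2)] catD(3,4,5)[OF c cc(3)] by (auto simp: Ins_W okl_def)
next
  fix g h i assume cp: "composable (W C) g i h"
  note p = W_comp_props[OF c cp]
  show "OComp (W C) g i h \<in> Ops (W C)" using p by simp
  show "Ins (W C) (OComp (W C) g i h) = take (i - 1) (Ins (W C) g) @ Ins (W C) h @ drop i (Ins (W C) g)"
    using p by (simp add: Ins_W)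
  show "Out (W C) (OComp (W C) g i h) = Out (W C) g" using p by simp
next
  fix g i assume g: "g \<in> Ops (W C)" and i: "1 \<le> i \<and> i \<le> arity (W C) g"
  then show "OComp (W C) g i (OId (W C) (Ins (W C) g ! (i - 1))) = g"
  proof -
    have il: "i < length g" "i - 1 < length g - 1" using i by (auto simp: Ins_W)
    have "insl C g ! (i - 1) = (Cod C (g!(i-1)), Dom C (g ! Suc (i - 1)))" using insl_nth[OF il(2)] .
    moreover have "Suc (i - 1) = i" using i by simp
    ultimately show ?thesis using right_id_W[OF c, of g i] g i il by (simp add: Ins_W)
  qed
next
  fix f g h i j assume a: "composable (W C) f i g" "composable (W C) g j h"
  show "OComp (W C) (OComp (W C) f i g) (i - 1 + j) h = OComp (W C) f i (OComp (W C) g j h)"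
    unfolding OComp_W by (rule seq_assoc_W[OF c a])
next
  fix f g h i k assume a: "composable (W C) f i g" "composable (W C) f k h" "i < k"
  show "OComp (W C) (OComp (W C) f i g) (k - 1 + arity (W C) g) h = OComp (W C) (OComp (W C) f k h) i g"
    unfolding OComp_W Ins_W insl_length by (rule par_assoc_W[OF c a])
qed

lemma funD:
  assumes "cat_functor Q C po pa"
  shows "category Q" "category C" "A \<in> Obj Q \<Longrightarrow> po A \<in> Obj C" "f \<in> Arr Q \<Longrightarrow> pa f \<in> Arr C"
    "f \<in> Arr Q \<Longrightarrow> Dom C (pa f) = po (Dom Q f)" "f \<in> Arr Q \<Longrightarrow> Cod C (pa f) = po (Cod Q f)"
    "A \<in> Obj Q \<Longrightarrow> pa (Idt Q A) = Idt C (po A)"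
    "f \<in> Arr Q \<Longrightarrow> g \<in> Arr Q \<Longrightarrow> Cod Q f = Dom Q g \<Longrightarrow> pa (Comp Q f g) = Comp C (pa f) (pa g)"
  using assms unfolding cat_functor_def by blast+

lemma okl_map: "cat_functor Q C po pa \<Longrightarrow> okl Q X \<Longrightarrow> okl C (map pa X)"
  unfolding okl_def using funD(4) by fastforce

lemma map_glue:
  assumes F: "cat_functor Q C po pa" and X: "okl Q X" and Y: "okl Q Y"
    and m: "Cod Q (last X) = Dom Q (hd Y)"
  shows "map pa (glue Q X Y) = glue C (map pa X) (map pa Y)"
proof -
  have a: "last X \<in> Arr Q" "hd Y \<in> Arr Q" using X Y unfolding okl_def by auto
  show ?thesis unfolding glue_def using funD(8)[OF F a m] okl_ne[OF X] okl_ne[OF Y]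
    by (simp add: map_butlast last_map hd_map map_tl)
qed

lemma insl_map:
  assumes F: "cat_functor Q C po pa" and X: "okl Q X"
  shows "insl C (map pa X) = map (map_prod po po) (insl Q X)"
proof (rule nth_equalityI)
  show "length (insl C (map pa X)) = length (map (map_prod po po) (insl Q X))" by simp
  fix k assume "k < length (insl C (map pa X))"
  then have k: "k < length X - 1" by simp
  then have a: "X!k \<in> Arr Q" "X ! Suc k \<in> Arr Q" using X unfolding okl_def by auto
  show "insl C (map pa X) ! k = map (map_prod po po) (insl Q X) ! k"
    using k insl_nth[of k "map pa X" C] insl_nth[OF k, of Q] funD(5,6)[OF F] a by simp
qed

lemma functor_W:
  assumes F: "cat_functor Q C po pa"
  shows "operad_functor (W Q) (W C) (W_col_map po) (W_op_map pa)"
  unfolding operad_functor_def W_col_map_def W_op_map_def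
proof (intro conjI ballI allI impI)
  show "is_operad (W Q)" "is_operad (W C)" using is_operad_W funD(1,2)[OF F] by auto
next
  fix cc assume "cc \<in> Col (W Q)"
  then obtain A B where cc: "cc = (A, B)" "A \<in> Obj Q" "B \<in> Obj Q" by auto
  show "map_prod po po cc \<in> Col (W C)" using cc funD(3)[OF F] by auto
  show "map pa (OId (W Q) cc) = OId (W C) (map_prod po po cc)" using cc funD(7)[OF F] by auto
next
  fix g assume "g \<in> Ops (W Q)"
  then have g: "okl Q g" by simp
  show "map pa g \<in> Ops (W C)" using okl_map[OF F g] by simp
  show "Ins (W C) (map pa g) = map (map_prod po po) (Ins (W Q) g)"
    unfolding Ins_W using insl_map[OF F g] .
  have "hd g \<in> Arr Q" "last g \<in> Arr Q" using g okl_ne[OF g] unfolding okl_def by auto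
  then show "Out (W C) (map pa g) = map_prod po po (Out (W Q) g)"
    using okl_ne[OF g] funD(5,6)[OF F] by (simp add: hd_map last_map)
next
  fix g h i assume cp: "composable (W Q) g i h"
  note f = composable_facts[OF funD(1)[OF F] cp]
  have cpC: "composable (W C) (map pa g) i (map pa h)"
  proof -
    have "g!(i-1) \<in> Arr Q" "g!i \<in> Arr Q" "hd h \<in> Arr Q" "last h \<in> Arr Q"
      using f okl_ne[OF f(3)] unfolding okl_def by auto
    moreover have "i - 1 < length g" "i < length g" using f by auto
    ultimately show ?thesis using cp okl_map[OF F] okl_ne[OF f(3)] funD(5,6)[OF F]
      unfolding composable_W by (simp add: hd_map last_map)
  qed
  note fC = composable_facts[OF funD(2)[OF F] cpC]
  have gl: "okl Q (glue Q (take i g) h)" "Cod Q (last (glue Q (take i g) h)) = Dom Q (hd (drop i g))"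
    using glue_props[OF funD(1)[OF F] f(1) f(3) f(5)] f(6) by auto
  show "map pa (OComp (W Q) g i h) = OComp (W C) (map pa g) i (map pa h)"
    unfolding OComp_W f(7) fC(7)
    using map_glue[OF F gl(1) f(2) gl(2)] map_glue[OF F f(1) f(3) f(5)] by (simp add: take_map drop_map)
qed

lemma glue_lift:
  assumes F: "cat_functor Q C po pa" and U: "cat_ulf Q C po pa"
    and a: "okl Q \<alpha>" and uU: "okl C Uu" and vV: "okl C V" and m: "Cod C (last Uu) = Dom C (hd V)"
    and e: "map pa \<alpha> = glue C Uu V"
  shows "\<exists>X Y. (okl Q X \<and> okl Q Y \<and> Cod Q (last X) = Dom Q (hd Y) \<and> \<alpha> = glue Q X Y
      \<and> map pa X = Uu \<and> map pa Y = V) \<and>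
     (\<forall>X' Y'. okl Q X' \<and> okl Q Y' \<and> Cod Q (last X') = Dom Q (hd Y') \<and> \<alpha> = glue Q X' Y'
      \<and> map pa X' = Uu \<and> map pa Y' = V \<longrightarrow> X' = X \<and> Y' = Y)"
proof -
  define n where "n = length Uu - 1"
  have neU: "Uu \<noteq> []" and neV: "V \<noteq> []" using okl_ne[OF uU] okl_ne[OF vV] by auto
  have "length (map pa \<alpha>) = length (glue C Uu V)" unfolding e ..
  then have len: "length \<alpha> = length Uu + length V - 1" unfolding glue_length[OF neU neV] length_map .
  have l1: "1 \<le> length Uu" "1 \<le> length V" using neU neV by (auto simp: Suc_leI)
  have nlt: "n < length \<alpha>" "n < length Uu" using len l1 unfolding n_def by linarith+
  have an: "\<alpha> ! n \<in> Arr Q" using a nlt unfolding okl_def by auto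
  have gn: "glue C Uu V ! n = Comp C (last Uu) (hd V)"
    unfolding glue_def n_def using neU by (simp add: nth_append)
  have pn: "pa (\<alpha> ! n) = Comp C (last Uu) (hd V)" using arg_cong[OF e, of "\<lambda>l. l ! n"] nlt gn by simp
  have lu: "last Uu \<in> Arr C" "hd V \<in> Arr C" using uU vV neU neV unfolding okl_def by auto
  define R where "R = (\<lambda>\<beta> \<gamma>. \<beta> \<in> Arr Q \<and> \<gamma> \<in> Arr Q \<and> Cod Q \<beta> = Dom Q \<gamma> \<and>
                   \<alpha> ! n = Comp Q \<beta> \<gamma> \<and> pa \<beta> = last Uu \<and> pa \<gamma> = hd V)"
  from U an have H: "\<forall>u\<in>Arr C. \<forall>v\<in>Arr C. Cod C u = Dom C v \<longrightarrow> pa (\<alpha> ! n) = Comp C u v \<longrightarrow>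
        (\<exists>!(\<beta>, \<gamma>). \<beta> \<in> Arr Q \<and> \<gamma> \<in> Arr Q \<and> Cod Q \<beta> = Dom Q \<gamma> \<and>
                   \<alpha> ! n = Comp Q \<beta> \<gamma> \<and> pa \<beta> = u \<and> pa \<gamma> = v)"
    unfolding cat_ulf_def by (rule bspec)
  have ex1: "\<exists>!p. case_prod R p" using H[rule_format, OF lu m pn] unfolding R_def .
  then obtain p where p1: "case_prod R p" and p2: "\<forall>q. case_prod R q \<longrightarrow> q = p"
    unfolding Ex1_def by blast
  obtain b c where pbc: "p = (b, c)" by (cases p)
  have Rbc: "R b c" using p1 pbc by simp
  then have bc: "b \<in> Arr Q" "c \<in> Arr Q" "Cod Q b = Dom Q c" "\<alpha> ! n = Comp Q b c"
      "pa b = last Uu" "pa c = hd V" unfolding R_def by auto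
  have uniq: "b' = b \<and> c' = c" if "b' \<in> Arr Q" "c' \<in> Arr Q" "Cod Q b' = Dom Q c'" "\<alpha> ! n = Comp Q b' c'"
      "pa b' = last Uu" "pa c' = hd V" for b' c'
  proof -
    have "R b' c'" unfolding R_def using that by simp
    then have "(b', c') = p" using p2 by auto
    then show ?thesis using pbc by simp
  qed
  define X where "X = take n \<alpha> @ [b]"
  define Y where "Y = c # drop (Suc n) \<alpha>"
  have sa: "set \<alpha> \<subseteq> Arr Q" using a by (simp add: okl_def)
  have P: "okl Q X \<and> okl Q Y \<and> Cod Q (last X) = Dom Q (hd Y) \<and> \<alpha> = glue Q X Y
      \<and> map pa X = Uu \<and> map pa Y = V"
  proof (intro conjI)
    show "okl Q X" "okl Q Y" using sa bc unfolding X_def Y_def okl_def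
      by (auto dest: in_set_takeD in_set_dropD)
    show "Cod Q (last X) = Dom Q (hd Y)" using bc unfolding X_def Y_def by simp
    show "\<alpha> = glue Q X Y" unfolding X_def Y_def glue_def using bc(4) nlt
      by (simp add: bc(4)[symmetric] id_take_nth_drop[OF nlt(1), symmetric])
    have "take n (map pa \<alpha>) = take n Uu" unfolding e using take_glue_lt[OF nlt(2)] .
    then have "map pa X = take n Uu @ [last Uu]" unfolding X_def using bc(5) by (simp add: take_map)
    moreover have "take n Uu = butlast Uu" unfolding n_def by (simp add: butlast_conv_take)
    ultimately show "map pa X = Uu" using append_butlast_last_id[OF neU] by simp
    have "drop (Suc n) (map pa \<alpha>) = tl V" unfolding e
      using drop_glue_ge[OF neU neV, of "Suc n" C] neU unfolding n_def by (simp add: drop_Suc)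
    then show "map pa Y = V" unfolding Y_def using bc(6) neV
      by (simp add: drop_map[symmetric])
  qed
  show ?thesis
  proof (rule exI[of _ X], rule exI[of _ Y], rule conjI[OF P], intro allI impI)
    fix X' Y' assume H: "okl Q X' \<and> okl Q Y' \<and> Cod Q (last X') = Dom Q (hd Y') \<and> \<alpha> = glue Q X' Y'
      \<and> map pa X' = Uu \<and> map pa Y' = V"
    have neX: "X' \<noteq> []" "Y' \<noteq> []" using H unfolding okl_def by auto
    have lX: "length X' = length Uu" using H by auto
    have ag: "\<alpha> = butlast X' @ Comp Q (last X') (hd Y') # tl Y'" using H unfolding glue_def by simp
    have lb: "length (butlast X') = n" using lX unfolding n_def by simp
    have an': "\<alpha> ! n = Comp Q (last X') (hd Y')" using ag lb by (simp add: nth_append)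
    have tk: "take n \<alpha> = butlast X'" using ag lb by simp
    have dr: "drop (Suc n) \<alpha> = tl Y'" using ag lb by simp
    have arr: "last X' \<in> Arr Q" "hd Y' \<in> Arr Q" using H neX unfolding okl_def by auto
    have "pa (last X') = last Uu" "pa (hd Y') = hd V" using H neX by (auto simp: last_map[symmetric] hd_map[symmetric])
    then have "last X' = b \<and> hd Y' = c" using uniq[OF arr] H an' by blast
    then have "X' = X" "Y' = Y" unfolding X_def Y_def using tk dr neX
      by (metis append_butlast_last_id, metis list.collapse)
    then show "X' = X \<and> Y' = Y" by simp
  qed
qed

lemma ulf_W:
  assumes F: "cat_functor Q C po pa" and U: "cat_ulf Q C po pa"
  shows "operad_ulf (W Q) (W C) (W_col_map po) (W_op_map pa)"
  unfolding operad_ulf_def W_op_map_def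
proof (intro ballI allI impI)
  fix \<alpha> g h i
  assume a: "\<alpha> \<in> Ops (W Q)" and cp: "composable (W C) g i h" and e: "map pa \<alpha> = OComp (W C) g i h"
  have cQ: "category Q" and cC: "category C" using funD[OF F] by auto
  have aok: "okl Q \<alpha>" using a by simp
  note f = composable_facts[OF cC cp]
  define T where "T = take i g"
  define D where "D = drop i g"
  have gl: "okl C (glue C T h)" "Cod C (last (glue C T h)) = Dom C (hd D)"
    using glue_props[OF cC f(1) f(3) f(5)] f(6) unfolding T_def D_def by auto
  have e1: "map pa \<alpha> = glue C (glue C T h) D" using e f(7) T_def D_def by simp
  obtain P D' where PD: "okl Q P" "okl Q D'" "Cod Q (last P) = Dom Q (hd D')" "\<alpha> = glue Q P D'"
      "map pa P = glue C T h" "map pa D' = D"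
    and PDu: "\<And>X' Y'. okl Q X' \<Longrightarrow> okl Q Y' \<Longrightarrow> Cod Q (last X') = Dom Q (hd Y') \<Longrightarrow> \<alpha> = glue Q X' Y'
      \<Longrightarrow> map pa X' = glue C T h \<Longrightarrow> map pa Y' = D \<Longrightarrow> X' = P \<and> Y' = D'"
    using glue_lift[OF F U aok gl(1) f(2)[folded D_def] gl(2) e1] by blast
  obtain T' G where TG: "okl Q T'" "okl Q G" "Cod Q (last T') = Dom Q (hd G)" "P = glue Q T' G"
      "map pa T' = T" "map pa G = h"
    and TGu: "\<And>X' Y'. okl Q X' \<Longrightarrow> okl Q Y' \<Longrightarrow> Cod Q (last X') = Dom Q (hd Y') \<Longrightarrow> P = glue Q X' Y'
      \<Longrightarrow> map pa X' = T \<Longrightarrow> map pa Y' = h \<Longrightarrow> X' = T' \<and> Y' = G"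
    using glue_lift[OF F U PD(1) f(1)[folded T_def] f(3) f(5)[folded T_def] PD(5)] by blast
  have lT': "length T' = i" using arg_cong[OF TG(5), of length] f(10) T_def by simp
  have neD': "D' \<noteq> []" using okl_ne[OF PD(2)] .
  have neT': "T' \<noteq> []" using okl_ne[OF TG(1)] .
  define \<beta> where "\<beta> = T' @ D'"
  have tb: "take i \<beta> = T'" and db: "drop i \<beta> = D'" unfolding \<beta>_def using lT' by auto
  have lb: "i < length \<beta>" unfolding \<beta>_def using lT' neD' by simp
  have cG: "Cod Q (last G) = Dom Q (hd D')"
    using PD(3) glue_props(3)[OF cQ TG(1) TG(2) TG(3)] TG(4) by simp
  have cpQ: "composable (W Q) \<beta> i G"
    unfolding composable_W
  proof (intro conjI)
    show "okl Q \<beta>" using TG(1) PD(2) unfolding \<beta>_def okl_def by auto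
    show "okl Q G" by (rule TG(2))
    show "1 \<le> i" by (rule f(8))
    show "i < length \<beta>" by (rule lb)
    have "\<beta> ! (i - 1) = last T'" unfolding \<beta>_def using lT' neT' f(8)
      by (simp add: nth_append last_conv_nth)
    then show "Dom Q (hd G) = Cod Q (\<beta> ! (i - 1))" using TG(3) by simp
    have "\<beta> ! i = hd D'" unfolding \<beta>_def using lT' neD' by (simp add: nth_append hd_conv_nth)
    then show "Cod Q (last G) = Dom Q (\<beta> ! i)" using cG by simp
  qed
  show "\<exists>!(\<beta>, \<gamma>). composable (W Q) \<beta> i \<gamma> \<and> \<alpha> = OComp (W Q) \<beta> i \<gamma> \<and> map pa \<beta> = g \<and> map pa \<gamma> = h"
  proof (rule ex1I[of _ "(\<beta>, G)"])
    show "case (\<beta>, G) of (\<beta>, \<gamma>) \<Rightarrow> composable (W Q) \<beta> i \<gamma> \<and> \<alpha> = OComp (W Q) \<beta> i \<gamma> \<and> map pa \<beta> = g \<and> map pa \<gamma> = h"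
    proof (simp only: prod.case, intro conjI)
      show "composable (W Q) \<beta> i G" by (rule cpQ)
      show "\<alpha> = OComp (W Q) \<beta> i G" unfolding OComp_W composable_facts(7)[OF cQ cpQ] tb db
        using PD(4) TG(4) by simp
      show "map pa \<beta> = g" unfolding \<beta>_def using TG(5) PD(6) T_def D_def by simp
      show "map pa G = h" by (rule TG(6))
    qed
  next
    fix p assume "case p of (\<beta>, \<gamma>) \<Rightarrow> composable (W Q) \<beta> i \<gamma> \<and> \<alpha> = OComp (W Q) \<beta> i \<gamma> \<and> map pa \<beta> = g \<and> map pa \<gamma> = h"
    moreover obtain b2 g2 where p: "p = (b2, g2)" by (cases p)
    ultimately have H: "composable (W Q) b2 i g2" "\<alpha> = W_comp Q b2 i g2" "map pa b2 = g" "map pa g2 = h" by auto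
    note f2 = composable_facts[OF cQ H(1)]
    have gl2: "okl Q (glue Q (take i b2) g2)" "Cod Q (last (glue Q (take i b2) g2)) = Dom Q (hd (drop i b2))"
      using glue_props[OF cQ f2(1) f2(3) f2(5)] f2(6) by auto
    have mt: "map pa (take i b2) = T" unfolding T_def H(3)[symmetric] by (rule take_map[symmetric])
    have md: "map pa (drop i b2) = D" unfolding D_def H(3)[symmetric] by (rule drop_map[symmetric])
    have "map pa (glue Q (take i b2) g2) = glue C T h"
      using map_glue[OF F f2(1) f2(3) f2(5)] mt H(4) by simp
    then have o: "glue Q (take i b2) g2 = P \<and> drop i b2 = D'"
      using PDu[OF gl2(1) f2(2) gl2(2)] H(2) f2(7) md by simp
    then have "take i b2 = T' \<and> g2 = G"
      using TGu[OF f2(1) f2(3) f2(5)] mt H(4) by simp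
    then have "b2 = \<beta> \<and> g2 = G" unfolding \<beta>_def using o append_take_drop_id[of i b2] by simp
    then show "p = (\<beta>, G)" using p by simp
  qed
qed

lemma finitary_W:
  assumes F: "cat_functor Q C po pa" and Fi: "cat_finitary Q C po pa"
  shows "operad_finitary (W Q) (W C) (W_col_map po) (W_op_map pa)"
  unfolding operad_finitary_def W_op_map_def W_col_map_def
proof (intro conjI ballI)
  fix cc assume "cc \<in> Col (W C)"
  then obtain A B where cc: "cc = (A, B)" "A \<in> Obj C" "B \<in> Obj C" by auto
  have "{q \<in> Col (W Q). map_prod po po q = cc} \<subseteq> {a \<in> Obj Q. po a = A} \<times> {b \<in> Obj Q. po b = B}"
    using cc by auto
  moreover have "finite ({a \<in> Obj Q. po a = A} \<times> {b \<in> Obj Q. po b = B})"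
    using Fi cc unfolding cat_finitary_def by auto
  ultimately show "finite {q \<in> Col (W Q). map_prod po po q = cc}" by (rule finite_subset)
next
  fix g assume "g \<in> Ops (W C)"
  then have g: "okl C g" by simp
  define S where "S = (\<Union>x\<in>set g. {a \<in> Arr Q. pa a = x})"
  have fS: "finite S" unfolding S_def
  proof (rule finite_UN_I)
    show "finite (set g)" by simp
    fix x assume "x \<in> set g"
    then have "x \<in> Arr C" using g unfolding okl_def by auto
    then show "finite {a \<in> Arr Q. pa a = x}" using Fi unfolding cat_finitary_def by auto
  qed
  have "{\<alpha> \<in> Ops (W Q). map pa \<alpha> = g} \<subseteq> {xs. set xs \<subseteq> S \<and> length xs \<le> length g}"
  proof
    fix \<alpha> assume "\<alpha> \<in> {\<alpha> \<in> Ops (W Q). map pa \<alpha> = g}"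
    then have a: "okl Q \<alpha>" "map pa \<alpha> = g" by auto
    have "set \<alpha> \<subseteq> S" unfolding S_def using a unfolding okl_def by auto
    moreover have "length \<alpha> \<le> length g" using a(2) by auto
    ultimately show "\<alpha> \<in> {xs. set xs \<subseteq> S \<and> length xs \<le> length g}" by simp
  qed
  then show "finite {\<alpha> \<in> Ops (W Q). map pa \<alpha> = g}"
    using finite_lists_length_le[OF fS] finite_subset by blast
qed

lemma constants_W: "{\<alpha> \<in> Ops (W Q). Ins (W Q) \<alpha> = [] \<and> Out (W Q) \<alpha> = (q0, qf)} = (\<lambda>a. [a]) ` Hom Q q0 qf"
proof (intro set_eqI iffI)
  fix \<alpha> assume "\<alpha> \<in> {\<alpha> \<in> Ops (W Q). Ins (W Q) \<alpha> = [] \<and> Out (W Q) \<alpha> = (q0, qf)}"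
  then have a: "okl Q \<alpha>" "length \<alpha> - 1 = 0" "Dom Q (hd \<alpha>) = q0" "Cod Q (last \<alpha>) = qf"
    by (auto simp: Ins_W dest: arg_cong[of _ _ length])
  then obtain x where x: "\<alpha> = [x]" unfolding okl_def by (cases \<alpha>) auto
  then show "\<alpha> \<in> (\<lambda>a. [a]) ` Hom Q q0 qf" using a unfolding Hom_def okl_def by auto
next
  fix \<alpha> assume "\<alpha> \<in> (\<lambda>a. [a]) ` Hom Q q0 qf"
  then show "\<alpha> \<in> {\<alpha> \<in> Ops (W Q). Ins (W Q) \<alpha> = [] \<and> Out (W Q) \<alpha> = (q0, qf)}"
    unfolding Hom_def by (auto simp: Ins_W okl_def)
qed

theorem mainTheorem6:
  fixes C :: "('o, 'a) cat" and Q :: "('s, 'b) cat"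
    and po :: "'s \<Rightarrow> 'o" and pa :: "'b \<Rightarrow> 'a" and q0 qf :: 's
  assumes "nfa_cat C Q po pa q0 qf"
  shows "nfa_op (W C) (W Q) (W_col_map po) (W_op_map pa) (q0, qf)
    \<and> nfa_op_lang (W C) (W Q) (W_col_map po) (W_op_map pa) (q0, qf)
        = (\<lambda>f. [f]) ` nfa_cat_lang C Q po pa q0 qf"
proof
  have F: "cat_functor Q C po pa" and U: "cat_ulf Q C po pa" and Fi: "cat_finitary Q C po pa"
    and q: "q0 \<in> Obj Q" "qf \<in> Obj Q"
    using assms unfolding nfa_cat_def by auto
  show "nfa_op (W C) (W Q) (W_col_map po) (W_op_map pa) (q0, qf)"
    unfolding nfa_op_def using functor_W[OF F] ulf_W[OF F U] finitary_W[OF F Fi] q by simp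
  show "nfa_op_lang (W C) (W Q) (W_col_map po) (W_op_map pa) (q0, qf)
        = (\<lambda>f. [f]) ` nfa_cat_lang C Q po pa q0 qf"
    unfolding nfa_op_lang_def nfa_cat_lang_def constants_W W_op_map_def image_image by simp
qed

end
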